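(* For integers $n,r$ with $3\le r\le n-3$, there is no graph $H$ with $\mathsf{TS}_2(H)\cong J(n,r)$; that is, $2\notin\mathcal{K}^{\mathsf{TS}}(J(n,r))$.
   Context: All graphs are finite, simple, undirected. A $k$-clique of a graph $H$ is a set of $k$ pairwise adjacent vertices. For a graph $H$ and integer $k\ge1$, the Token Sliding graph $\mathsf{TS}_k(H)$ has as vertices the $k$-cliques of $H$, and two $k$-cliques $A,B$ are adjacent iff $A\setminus B=\{u\}$, $B\setminus A=\{v\}$ for some vertices $u,v$ with $uv\in E(H)$. $\mathcal{K}^{\mathsf{TS}}(G)=\{k\ge1:\ \exists H,\ \mathsf{TS}_k(H)\cong G\}$. The Johnson graph $J(n,r)$ has as vertices the $r$-subsets of $\{1,\dots,n\}$, two being adjacent iff their intersection has size $r-1$. *)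

theory Defs
  imports Main
begin

definition simple_graph :: "'a set \<Rightarrow> ('a \<Rightarrow> 'a \<Rightarrow> bool) \<Rightarrow> bool" where
  "simple_graph V E \<longleftrightarrow> finite V \<and> (\<forall>u v. E u v \<longrightarrow> u \<in> V \<and> v \<in> V)
     \<and> (\<forall>u v. E u v \<longrightarrow> E v u) \<and> (\<forall>u. \<not> E u u)"

definition cliques :: "'a set \<Rightarrow> ('a \<Rightarrow> 'a \<Rightarrow> bool) \<Rightarrow> nat \<Rightarrow> 'a set set" where
  "cliques V E k = {C. C \<subseteq> V \<and> card C = k \<and> (\<forall>u\<in>C. \<forall>v\<in>C. u \<noteq> v \<longrightarrow> E u v)}"

definition TS_vert :: "'a set \<Rightarrow> ('a \<Rightarrow> 'a \<Rightarrow> bool) \<Rightarrow> nat \<Rightarrow> 'a set set" where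
  "TS_vert V E k = cliques V E k"

definition TS_adj :: "'a set \<Rightarrow> ('a \<Rightarrow> 'a \<Rightarrow> bool) \<Rightarrow> nat \<Rightarrow> 'a set \<Rightarrow> 'a set \<Rightarrow> bool" where
  "TS_adj V E k A B \<longleftrightarrow> A \<in> cliques V E k \<and> B \<in> cliques V E k \<and>
     (\<exists>u v. A - B = {u} \<and> B - A = {v} \<and> E u v)"

definition johnson_vert :: "nat \<Rightarrow> nat \<Rightarrow> nat set set" where
  "johnson_vert n r = {A. A \<subseteq> {1..n} \<and> card A = r}"

definition johnson_adj :: "nat \<Rightarrow> nat \<Rightarrow> nat set \<Rightarrow> nat set \<Rightarrow> bool" where
  "johnson_adj n r A B \<longleftrightarrow> A \<in> johnson_vert n r \<and> B \<in> johnson_vert n r \<and>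
     card (A \<inter> B) = r - 1"

definition graph_iso :: "'a set \<Rightarrow> ('a \<Rightarrow> 'a \<Rightarrow> bool) \<Rightarrow> 'b set \<Rightarrow> ('b \<Rightarrow> 'b \<Rightarrow> bool) \<Rightarrow> bool" where
  "graph_iso V1 E1 V2 E2 \<longleftrightarrow> (\<exists>f. bij_betw f V1 V2 \<and>
     (\<forall>x\<in>V1. \<forall>y\<in>V1. E1 x y \<longleftrightarrow> E2 (f x) (f y)))"

end

theory Submission imports Defs begin

lemma J_tri:
  assumes r3: "3 \<le> r" and n: "r + 3 \<le> n"
    and AB: "johnson_adj n r A B" and AX: "johnson_adj n r A X" and BX: "johnson_adj n r B X"
  shows "\<exists>Y. johnson_adj n r A Y \<and> johnson_adj n r B Y \<and> johnson_adj n r X Y"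
proof -
  have A: "A \<subseteq> {1..n}" "card A = r" and B: "B \<subseteq> {1..n}" "card B = r"
    and X: "X \<subseteq> {1..n}" "card X = r"
    using AB AX unfolding johnson_adj_def johnson_vert_def by auto
  have fA: "finite A" and fB: "finite B" and fX: "finite X"
    using A B X finite_subset by blast+
  have iAB: "card (A \<inter> B) = r - 1" and iAX: "card (A \<inter> X) = r - 1" and iBX: "card (B \<inter> X) = r - 1"
    using AB AX BX unfolding johnson_adj_def by auto
  have uAB: "card (A \<union> B) = r + 1"
    using card_Un_Int[OF fA fB] A B iAB r3 by simp
  show ?thesis
  proof (cases "X \<subseteq> A \<union> B")
    case True
    have "card (A \<union> B) + card (A \<inter> B \<inter> X) \<ge> card (A \<inter> B) + card X"
    proof -
      have "card ((A \<inter> B) \<union> X) + card ((A \<inter> B) \<inter> X) = card (A \<inter> B) + card X"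
        using card_Un_Int[of "A \<inter> B" X] fA fX by simp
      moreover have "card ((A \<inter> B) \<union> X) \<le> card (A \<union> B)"
        using True by (intro card_mono) (use fA fB in auto)
      ultimately show ?thesis by linarith
    qed
    then have "card (A \<inter> B \<inter> X) \<ge> 1" using uAB iAB X r3 by linarith
    then obtain t where t: "t \<in> A \<inter> B \<inter> X"
      by (metis card.empty ex_in_conv not_one_le_zero)
    define Y where "Y = (A \<union> B) - {t}"
    have cY: "card Y = r" unfolding Y_def using uAB t fA fB by simp
    have YJ: "Y \<in> johnson_vert n r" using cY A B unfolding johnson_vert_def Y_def by auto
    have "A \<inter> Y = A - {t}" "B \<inter> Y = B - {t}" "X \<inter> Y = X - {t}" using True unfolding Y_def by auto
    then have "card (A \<inter> Y) = r - 1" "card (B \<inter> Y) = r - 1" "card (X \<inter> Y) = r - 1"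
      using t A B X fA fB fX by auto
    then show ?thesis using YJ AB AX unfolding johnson_adj_def by auto
  next
    case False
    then obtain c where c: "c \<in> X" "c \<notin> A" "c \<notin> B" by auto
    have XA: "X \<inter> A = X - {c}"
    proof -
      have "X \<inter> A \<subseteq> X - {c}" using c by auto
      moreover have "card (X - {c}) = r - 1" using c X fX by simp
      moreover have "card (X \<inter> A) = r - 1" using iAX by (simp add: Int_commute)
      ultimately show ?thesis using fX by (metis card_subset_eq finite_Diff)
    qed
    have XB: "X \<inter> B = X - {c}"
    proof -
      have "X \<inter> B \<subseteq> X - {c}" using c by auto
      moreover have "card (X - {c}) = r - 1" using c X fX by simp
      moreover have "card (X \<inter> B) = r - 1" using iBX by (simp add: Int_commute)
      ultimately show ?thesis using fX by (metis card_subset_eq finite_Diff)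
    qed
    have S: "A \<inter> B = X - {c}"
    proof -
      have "X - {c} \<subseteq> A \<inter> B" using XA XB by auto
      moreover have "card (X - {c}) = r - 1" using c X fX by simp
      ultimately show ?thesis using iAB fA by (metis card_subset_eq finite_Int)
    qed
    have U: "A \<union> B \<union> X \<subseteq> insert c (A \<union> B)" using S by blast
    have "card (A \<union> B \<union> X) \<le> r + 2"
      using card_mono[OF _ U] uAB fA fB c by auto
    then have "card (A \<union> B \<union> X) < card {1..n}" using n by simp
    then obtain d where d: "d \<in> {1..n}" "d \<notin> A \<union> B \<union> X"
    proof -
      have "\<not> {1..n} \<subseteq> A \<union> B \<union> X"
        using card_mono[of "A \<union> B \<union> X" "{1..n}"] fA fB fX by (meson \<open>card (A \<union> B \<union> X) < card {1..n}\<close> finite_UnI not_le)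
      then show ?thesis using that by blast
    qed
    define Y where "Y = insert d (A \<inter> B)"
    have cY: "card Y = r" unfolding Y_def using d iAB fA r3 by simp
    have YJ: "Y \<in> johnson_vert n r" using cY A d unfolding johnson_vert_def Y_def by auto
    have "A \<inter> Y = A \<inter> B" "B \<inter> Y = A \<inter> B" "X \<inter> Y = A \<inter> B" using d S unfolding Y_def by auto
    then have "card (A \<inter> Y) = r - 1" "card (B \<inter> Y) = r - 1" "card (X \<inter> Y) = r - 1"
      using iAB by auto
    then show ?thesis using YJ AB AX unfolding johnson_adj_def by auto
  qed
qed

lemma TS_card1:
  assumes "TS_adj V E 2 Z W"
  shows "card (Z \<inter> W) = 1"
proof -
  from assms obtain x where xy: "Z - W = {x}" unfolding TS_adj_def by blast
  from assms have Z: "card Z = 2" unfolding TS_adj_def cliques_def by blast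
  then have fZ: "finite Z" by (simp add: card_ge_0_finite)
  have "card Z = card (Z \<inter> W) + card (Z - W)" using fZ by (rule card_Int_Diff)
  then show ?thesis using xy Z by simp
qed

theorem theorem3p9:
  fixes n r :: nat and V :: "'a set" and E :: "'a \<Rightarrow> 'a \<Rightarrow> bool"
  assumes "3 \<le> r" and "r + 3 \<le> n"
    and "simple_graph V E"
  shows "\<not> graph_iso (TS_vert V E 2) (TS_adj V E 2) (johnson_vert n r) (johnson_adj n r)"
proof
  assume "graph_iso (TS_vert V E 2) (TS_adj V E 2) (johnson_vert n r) (johnson_adj n r)"
  then obtain f where bij: "bij_betw f (cliques V E 2) (johnson_vert n r)"
    and iso: "\<And>x y. x \<in> cliques V E 2 \<Longrightarrow> y \<in> cliques V E 2 \<Longrightarrow> TS_adj V E 2 x y \<longleftrightarrow> johnson_adj n r (f x) (f y)"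
    unfolding graph_iso_def TS_vert_def by blast
  have sym: "\<And>u v. E u v \<Longrightarrow> E v u" and irr: "\<And>u. \<not> E u u" and EV: "\<And>u v. E u v \<Longrightarrow> u \<in> V \<and> v \<in> V"
    using assms(3) unfolding simple_graph_def by blast+
  define A0 where "A0 = {1..r}"
  define B0 where "B0 = {2..r+1}"
  have A0J: "A0 \<in> johnson_vert n r" and B0J: "B0 \<in> johnson_vert n r"
    using assms unfolding A0_def B0_def johnson_vert_def by auto
  have "A0 \<inter> B0 = {2..r}" unfolding A0_def B0_def by auto
  then have AB0: "johnson_adj n r A0 B0" using A0J B0J unfolding johnson_adj_def by simp
  define P where "P = inv_into (cliques V E 2) f A0"
  define Q where "Q = inv_into (cliques V E 2) f B0"
  have PC: "P \<in> cliques V E 2" and fP: "f P = A0"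
    using A0J bij unfolding P_def by (auto simp: bij_betw_def inv_into_into f_inv_into_f)
  have QC: "Q \<in> cliques V E 2" and fQ: "f Q = B0"
    using B0J bij unfolding Q_def by (auto simp: bij_betw_def inv_into_into f_inv_into_f)
  have "TS_adj V E 2 P Q" using iso[OF PC QC] fP fQ AB0 by simp
  then obtain u w where uw: "P - Q = {u}" "Q - P = {w}" "E u w" unfolding TS_adj_def by blast
  have "card (P \<inter> Q) = 1" using TS_card1 \<open>TS_adj V E 2 P Q\<close> by blast
  then obtain v where v: "P \<inter> Q = {v}" by (meson card_1_singletonE)
  have Pe: "P = {u, v}" using uw v by auto
  have Qe: "Q = {w, v}" using uw v by auto
  have dist: "u \<noteq> v" "w \<noteq> v" "u \<noteq> w" using uw v by auto
  have Euv: "E u v" and Ewv: "E w v" using PC QC Pe Qe dist unfolding cliques_def by auto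
  define R where "R = {u, w}"
  have RC: "R \<in> cliques V E 2" using uw dist EV sym unfolding R_def cliques_def by auto
  have PR: "TS_adj V E 2 P R" unfolding TS_adj_def using PC RC Pe R_def dist sym Ewv
    by (intro conjI exI[of _ v] exI[of _ w]) auto
  have QR: "TS_adj V E 2 Q R" unfolding TS_adj_def using QC RC Qe R_def dist sym Euv
    by (intro conjI exI[of _ v] exI[of _ u]) auto
  have XJ: "f R \<in> johnson_vert n r" using RC bij by (auto simp: bij_betw_def)
  obtain Y where Y: "johnson_adj n r A0 Y" "johnson_adj n r B0 Y" "johnson_adj n r (f R) Y"
    using J_tri[OF assms(1,2) AB0] iso[OF PC RC] iso[OF QC RC] PR QR fP fQ by auto
  have YJ: "Y \<in> johnson_vert n r" using Y unfolding johnson_adj_def by auto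
  define Z where "Z = inv_into (cliques V E 2) f Y"
  have ZC: "Z \<in> cliques V E 2" and fZ: "f Z = Y"
    using YJ bij unfolding Z_def by (auto simp: bij_betw_def inv_into_into f_inv_into_f)
  have "TS_adj V E 2 P Z" "TS_adj V E 2 Q Z" "TS_adj V E 2 R Z"
    using iso[OF PC ZC] iso[OF QC ZC] iso[OF RC ZC] Y fP fQ fZ by auto
  then have c: "card ({u,v} \<inter> Z) = 1" "card ({w,v} \<inter> Z) = 1" "card ({u,w} \<inter> Z) = 1"
    using TS_card1 Pe Qe R_def by blast+
  have two: "\<And>a b. a \<noteq> b \<Longrightarrow> a \<in> Z \<Longrightarrow> b \<in> Z \<Longrightarrow> card ({a,b} \<inter> Z) = 2"
  proof -
    fix a b assume "a \<noteq> b" "a \<in> Z" "b \<in> Z"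
    then have "{a,b} \<inter> Z = {a,b}" by auto
    then show "card ({a,b} \<inter> Z) = 2" using \<open>a \<noteq> b\<close> by simp
  qed
  have zero: "\<And>a b. a \<notin> Z \<Longrightarrow> b \<notin> Z \<Longrightarrow> card ({a,b} \<inter> Z) = 0"
  proof -
    fix a b assume "a \<notin> Z" "b \<notin> Z"
    then have "{a,b} \<inter> Z = {}" by auto
    then show "card ({a,b} \<inter> Z) = 0" by simp
  qed
  show False
  proof (cases "v \<in> Z")
    case True
    then have "u \<notin> Z" using two[of u v] c(1) dist by auto
    moreover have "w \<notin> Z" using two[of w v] c(2) dist True by auto
    ultimately show False using zero[of u w] c(3) by simp
  next
    case False
    then have "u \<in> Z" using zero[of u v] c(1) False by (cases "u \<in> Z") auto
    moreover have "w \<in> Z" using zero[of w v] c(2) False by (cases "w \<in> Z") auto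
    ultimately show False using two[of u w] c(3) dist by simp
  qed
qed

end
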